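(* The space $R^\natural(S^1\times D^2,A_1)$ is homeomorphic to $S^3=\{(z_1,z_2)\in\mathbb{C}^2:|z_1|^2+|z_2|^2=1\}$, via the map sending $(z_1,z_2)$ to the class of $$a=i\sigma_z,\ b=a^{-1},\ A=\begin{pmatrix} z_1&-\bar z_2\\ z_2&\bar z_1\end{pmatrix},\ B=1,\ h=i\sigma_x,\ w=-1.$$ All classes in $R^\natural(S^1\times D^2,A_1)$ are nonabelian.
   Context: Pauli matrices standard. $R^\natural(S^1\times D^2,A_1)$ is the traceless character variety of the solid torus minus an unknotted arc $A_1$, a small meridional loop $H$ around $A_1$, and an arc $W$ joining $A_1$ to $H$, whose fundamental group is $\langle A,B,a,b,h,w\mid hwa=ah,\ b=a^{-1},\ B=1\rangle$. Concretely, it is the space of tuples $(A,B,a,b,h,w)\in SU(2)^6$ with $\operatorname{tr}a=\operatorname{tr}h=0$, $w=-1$, $hwa=ah$, $b=a^{-1}$, $B=1$, modulo simultaneous conjugation, with quotient topology. A class is nonabelian if the matrices of a representative do not all pairwise commute. *)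

theory Defs
  imports "HOL-Analysis.Analysis"
begin

type_synonym cmat = "complex^2^2"

definition mat2 :: "complex \<Rightarrow> complex \<Rightarrow> complex \<Rightarrow> complex \<Rightarrow> cmat" where
  "mat2 p q r s = vector [vector [p, q], vector [r, s]]"

definition ctrans :: "cmat \<Rightarrow> cmat" where
  "ctrans U = (\<chi> i j. cnj (U $ j $ i))"

definition SU2 :: "cmat set" where
  "SU2 = {U. U ** ctrans U = mat 1 \<and> det U = 1}"

definition tr2 :: "cmat \<Rightarrow> complex" where
  "tr2 U = U $ 1 $ 1 + U $ 2 $ 2"

definition sigma_x :: cmat where "sigma_x = mat2 0 1 1 0"
definition sigma_z :: cmat where "sigma_z = mat2 1 0 0 (-1)"

type_synonym tuple6 = "cmat \<times> cmat \<times> cmat \<times> cmat \<times> cmat \<times> cmat"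

text \<open>Representations (A,B,a,b,h,w) of the fundamental group with the traceless conditions.\<close>
definition Rep_set :: "tuple6 set" where
  "Rep_set = {(A, B, a, b, h, w).
     A \<in> SU2 \<and> B \<in> SU2 \<and> a \<in> SU2 \<and> b \<in> SU2 \<and> h \<in> SU2 \<and> w \<in> SU2 \<and>
     tr2 a = 0 \<and> tr2 h = 0 \<and> w = - mat 1 \<and> h ** w ** a = a ** h \<and>
     b = matrix_inv a \<and> B = mat 1}"

definition conj_tuple :: "cmat \<Rightarrow> tuple6 \<Rightarrow> tuple6" where
  "conj_tuple g t = (case t of (A, B, a, b, h, w) \<Rightarrow>
     (g ** A ** matrix_inv g, g ** B ** matrix_inv g, g ** a ** matrix_inv g,
      g ** b ** matrix_inv g, g ** h ** matrix_inv g, g ** w ** matrix_inv g))"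

definition conj_rel :: "tuple6 rel" where
  "conj_rel = {(t, t'). t \<in> Rep_set \<and> t' \<in> Rep_set \<and> (\<exists>g\<in>SU2. t' = conj_tuple g t)}"

definition quotient_topology :: "'a topology \<Rightarrow> 'a rel \<Rightarrow> 'a set topology" where
  "quotient_topology X r =
     topology (\<lambda>U. U \<subseteq> topspace X // r \<and> openin X (\<Union>U))"

definition char_variety :: "tuple6 set topology" where
  "char_variety = quotient_topology (subtopology euclidean Rep_set) conj_rel"

definition S3 :: "(complex \<times> complex) set" where
  "S3 = {(z1, z2). (cmod z1)\<^sup>2 + (cmod z2)\<^sup>2 = 1}"

definition param_map :: "complex \<times> complex \<Rightarrow> tuple6 set" where
  "param_map z = (case z of (z1, z2) \<Rightarrow>
     conj_rel `` {(mat2 z1 (- cnj z2) z2 (cnj z1), mat 1, mat \<i> ** sigma_z, matrix_inv (mat \<i> ** sigma_z),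
                   mat \<i> ** sigma_x, - mat 1)})"

definition pairwise_commute_tuple :: "tuple6 \<Rightarrow> bool" where
  "pairwise_commute_tuple t = (case t of (A, B, a, b, h, w) \<Rightarrow>
     (\<forall>X\<in>{A, B, a, b, h, w}. \<forall>Y\<in>{A, B, a, b, h, w}. X ** Y = Y ** X))"

definition nonabelian_class :: "tuple6 set \<Rightarrow> bool" where
  "nonabelian_class c = (\<exists>t\<in>c. \<not> pairwise_commute_tuple t)"

end

theory Submission
  imports Defs
begin


lemma cmat_eq: "(X::cmat) = mat2 (X$1$1) (X$1$2) (X$2$1) (X$2$2)"
  unfolding mat2_def by (simp add: vec_eq_iff forall_2)

lemma mat2_nth[simp]: "mat2 a b c d $1$1 = a" "mat2 a b c d $1$2 = b" "mat2 a b c d $2$1 = c" "mat2 a b c d $2$2 = d"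
  unfolding mat2_def by simp_all

lemma mat2_eq_iff: "mat2 a b c d = mat2 a' b' c' d' \<longleftrightarrow> a=a' \<and> b=b' \<and> c=c' \<and> d=d'"
  by (metis mat2_nth)

lemma mat2_mult: "mat2 a b c d ** mat2 e f g h = mat2 (a*e+b*g) (a*f+b*h) (c*e+d*g) (c*f+d*h)"
  by (subst cmat_eq) (simp add: matrix_matrix_mult_def sum_2)

lemma mat2_mat: "mat k = mat2 k 0 0 k"
  by (subst cmat_eq) (simp add: mat_def)

lemma mat2_uminus: "- mat2 a b c d = mat2 (-a) (-b) (-c) (-d)"
  by (subst cmat_eq) simp

lemma mat2_det: "det (mat2 a b c d) = a*d - b*c"
  by (simp add: det_2)

lemma mat2_ctrans: "ctrans (mat2 a b c d) = mat2 (cnj a) (cnj c) (cnj b) (cnj d)"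
  by (subst cmat_eq) (simp add: ctrans_def)

lemma mat2_tr: "tr2 (mat2 a b c d) = a + d" by (simp add: tr2_def)

definition Q :: "complex \<Rightarrow> complex \<Rightarrow> cmat" where "Q p q = mat2 p (- cnj q) q (cnj p)"
definition nrm :: "complex \<Rightarrow> complex \<Rightarrow> real" where "nrm p q = (cmod p)^2 + (cmod q)^2"

lemma Q_mult: "Q p q ** Q r s = Q (p*r - cnj q * s) (q*r + cnj p * s)"
  unfolding Q_def mat2_mult mat2_eq_iff by (simp add: algebra_simps)

lemma Q_eq_iff: "Q p q = Q r s \<longleftrightarrow> p = r \<and> q = s"
  unfolding Q_def mat2_eq_iff by auto

lemma nrm_cnj: "complex_of_real (nrm p q) = p * cnj p + q * cnj q"
  by (simp only: nrm_def of_real_add complex_norm_square)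

lemma Q_ctrans: "ctrans (Q p q) = Q (cnj p) (-q)"
  unfolding Q_def mat2_ctrans by simp

lemma Q_one: "mat 1 = Q 1 0" unfolding Q_def mat2_mat by simp

lemma Q_mult_ctrans: "Q p q ** Q (cnj p) (-q) = Q (nrm p q) 0"
  unfolding Q_mult Q_eq_iff nrm_cnj by (simp add: algebra_simps)
lemma Q_ctrans_mult: "Q (cnj p) (-q) ** Q p q = Q (nrm p q) 0"
  unfolding Q_mult Q_eq_iff nrm_cnj by (simp add: algebra_simps)

lemma Q_det: "det (Q p q) = nrm p q"
  unfolding Q_def mat2_det nrm_cnj by (simp add: algebra_simps)

lemma SU2_Q: "nrm p q = 1 \<Longrightarrow> Q p q \<in> SU2"
  unfolding SU2_def using Q_mult_ctrans[of p q] by (simp add: Q_ctrans Q_det Q_one)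

lemma SU2_E:
  assumes "U \<in> SU2" obtains p q where "U = Q p q" "nrm p q = 1"
proof -
  obtain a b c d where U: "U = mat2 a b c d" using cmat_eq by blast
  from assms have e: "a * cnj a + b * cnj b = 1" "a * cnj c + b * cnj d = 0" "c * cnj a + d * cnj b = 0"
     "c * cnj c + d * cnj d = 1" "a*d - b*c = 1"
    using assms unfolding SU2_def U by (simp_all add: mat2_ctrans mat2_mult mat2_det mat2_mat mat2_eq_iff)
  have "cnj a * (a*d - b*c) = d * (a * cnj a + b * cnj b) - b * (c * cnj a + d * cnj b)"
    by (simp add: algebra_simps)
  hence d: "d = cnj a" using e by simp
  have "cnj c * (a*d - b*c) = d * (a * cnj c + b * cnj d) - b * (c * cnj c + d * cnj d)"
    by (simp add: algebra_simps)
  hence "cnj c = - b" using e by simp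
  hence b: "b = - cnj c" using arg_cong[of "cnj c" "-b" cnj] by simp
  have "U = Q a c" unfolding U Q_def b d ..
  moreover have "nrm a c = 1" using e(1) b nrm_cnj[of a c] 
    by (metis complex_cnj_cnj complex_cnj_minus mult.commute mult_minus_left mult_minus_right minus_minus of_real_eq_1_iff)
  ultimately show ?thesis using that by blast
qed

lemma nrm_mult: "nrm (p*r - cnj q * s) (q*r + cnj p * s) = nrm p q * nrm r s"
proof -
  have "complex_of_real (nrm (p*r - cnj q * s) (q*r + cnj p * s)) = complex_of_real (nrm p q * nrm r s)"
    unfolding of_real_mult nrm_cnj by (simp add: algebra_simps)
  thus ?thesis by (simp only: of_real_eq_iff)
qed

lemma matrix_inv_eq: "(A::cmat) ** B = mat 1 \<Longrightarrow> B ** A = mat 1 \<Longrightarrow> matrix_inv A = B"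
proof -
  assume ab: "A ** B = mat 1" "B ** A = mat 1"
  hence "\<exists>B'. A ** B' = mat 1 \<and> B' ** A = mat 1" by blast
  hence b': "A ** matrix_inv A = mat 1 \<and> matrix_inv A ** A = mat 1"
    unfolding matrix_inv_def by (rule someI_ex)
  have "matrix_inv A = matrix_inv A ** (A ** B)" using ab by simp
  also have "\<dots> = B" using b' by (simp add: matrix_mul_assoc)
  finally show ?thesis .
qed

lemma inv_Q: "nrm p q = 1 \<Longrightarrow> matrix_inv (Q p q) = Q (cnj p) (- q)"
  by (rule matrix_inv_eq) (simp_all add: Q_mult_ctrans Q_ctrans_mult Q_one)

lemma SU2_inv: "g \<in> SU2 \<Longrightarrow> matrix_inv g \<in> SU2"
  by (metis SU2_E SU2_Q inv_Q nrm_def complex_mod_cnj norm_minus_cancel)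

lemma SU2_inv_r: "g \<in> SU2 \<Longrightarrow> g ** matrix_inv g = mat 1"
  by (metis SU2_E inv_Q Q_mult_ctrans Q_one of_real_1)
lemma SU2_inv_l: "g \<in> SU2 \<Longrightarrow> matrix_inv g ** g = mat 1"
  by (metis SU2_E inv_Q Q_ctrans_mult Q_one of_real_1)

lemma SU2_mult: "g \<in> SU2 \<Longrightarrow> h \<in> SU2 \<Longrightarrow> g ** h \<in> SU2"
  by (metis SU2_E SU2_Q Q_mult nrm_mult mult_1)

lemma SU2_one: "mat 1 \<in> SU2" unfolding Q_one by (rule SU2_Q) (simp add: nrm_def)

lemma inv_inv: "g \<in> SU2 \<Longrightarrow> matrix_inv (matrix_inv g) = g"
  by (rule matrix_inv_eq) (simp_all add: SU2_inv_l SU2_inv_r)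

lemma inv_mult: "g \<in> SU2 \<Longrightarrow> h \<in> SU2 \<Longrightarrow> matrix_inv (g ** h) = matrix_inv h ** matrix_inv g"
proof (rule matrix_inv_eq)
  assume "g \<in> SU2" "h \<in> SU2"
  thus "g ** h ** (matrix_inv h ** matrix_inv g) = mat 1"
    by (metis SU2_inv_r matrix_mul_assoc matrix_mul_rid)
  show "matrix_inv h ** matrix_inv g ** (g ** h) = mat 1" using \<open>g \<in> SU2\<close> \<open>h \<in> SU2\<close>
    by (metis SU2_inv_l matrix_mul_assoc matrix_mul_rid)
qed

definition ip :: "cmat \<Rightarrow> cmat \<Rightarrow> real" where
  "ip X Y = Re (X$1$1 * cnj (Y$1$1) + X$2$1 * cnj (Y$2$1))"

lemma ip_Q: "ip (Q p q) (Q r s) = Re (p * cnj r + q * cnj s)"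
  unfolding ip_def Q_def by simp

lemma ip_left: "ip (Q u v ** Q p q) (Q u v ** Q r s) = nrm u v * ip (Q p q) (Q r s)"
  unfolding Q_mult ip_Q nrm_def cmod_power2 by (simp add: algebra_simps power2_eq_square)

lemma ip_right: "ip (Q p q ** Q u v) (Q r s ** Q u v) = nrm u v * ip (Q p q) (Q r s)"
  unfolding Q_mult ip_Q nrm_def cmod_power2 by (simp add: algebra_simps power2_eq_square)



definition cj :: "cmat \<Rightarrow> cmat \<Rightarrow> cmat" where "cj g X = g ** X ** matrix_inv g"

lemma conj_tuple_cj: "conj_tuple g (A,B,a,b,h,w) = (cj g A, cj g B, cj g a, cj g b, cj g h, cj g w)"
  unfolding conj_tuple_def cj_def by simp

lemma cj_mult: "g \<in> SU2 \<Longrightarrow> cj g (X ** Y) = cj g X ** cj g Y"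
proof -
  assume g: "g \<in> SU2"
  have "cj g X ** cj g Y = g ** X ** (matrix_inv g ** g) ** Y ** matrix_inv g"
    unfolding cj_def by (simp only: matrix_mul_assoc)
  also have "\<dots> = cj g (X ** Y)" unfolding cj_def using g by (simp add: SU2_inv_l matrix_mul_assoc)
  finally show ?thesis ..
qed

lemma cj_one: "g \<in> SU2 \<Longrightarrow> cj g (mat 1) = mat 1"
  unfolding cj_def by (simp add: SU2_inv_r)

lemma neg_mult: "(- X) ** (Y::cmat) = - (X ** Y)"
  by (simp add: vec_eq_iff matrix_matrix_mult_def sum_negf)
lemma mult_neg: "(X::cmat) ** (- Y) = - (X ** Y)"
  by (simp add: vec_eq_iff matrix_matrix_mult_def sum_negf)

lemma cj_neg: "cj g (- X) = - cj g X"
  unfolding cj_def by (simp add: neg_mult mult_neg)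

lemma cj_SU2: "g \<in> SU2 \<Longrightarrow> X \<in> SU2 \<Longrightarrow> cj g X \<in> SU2"
  unfolding cj_def by (simp add: SU2_mult SU2_inv)

lemma tr2_comm: "tr2 ((X::cmat) ** Y) = tr2 (Y ** X)"
  by (simp add: tr2_def matrix_matrix_mult_def sum_2 algebra_simps)

lemma cj_tr2: "g \<in> SU2 \<Longrightarrow> tr2 (cj g X) = tr2 X"
proof -
  assume g: "g \<in> SU2"
  have "tr2 (cj g X) = tr2 (matrix_inv g ** (g ** X))" unfolding cj_def by (rule tr2_comm)
  also have "\<dots> = tr2 X" using g by (simp add: matrix_mul_assoc SU2_inv_l)
  finally show ?thesis .
qed

lemma cj_inv: "g \<in> SU2 \<Longrightarrow> a \<in> SU2 \<Longrightarrow> cj g (matrix_inv a) = matrix_inv (cj g a)"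
  by (rule matrix_inv_eq[symmetric]) (simp_all add: cj_mult[symmetric] SU2_inv_l SU2_inv_r cj_one)

lemma cj_comp: "g \<in> SU2 \<Longrightarrow> k \<in> SU2 \<Longrightarrow> cj k (cj g X) = cj (k ** g) X"
  unfolding cj_def by (simp add: inv_mult matrix_mul_assoc)

lemma cj_id: "cj (mat 1) X = X"
proof -
  have "matrix_inv (mat 1 :: cmat) = mat 1" by (rule matrix_inv_eq) simp_all
  thus ?thesis unfolding cj_def by simp
qed

lemma cj_back: "g \<in> SU2 \<Longrightarrow> cj (matrix_inv g) (cj g X) = X"
  by (simp add: cj_comp SU2_inv SU2_inv_l cj_id)

lemma Rep_conj: "t \<in> Rep_set \<Longrightarrow> g \<in> SU2 \<Longrightarrow> conj_tuple g t \<in> Rep_set"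
proof -
  assume t: "t \<in> Rep_set" and g: "g \<in> SU2"
  obtain A B a b h w where tt: "t = (A,B,a,b,h,w)" by (cases t)
  have c: "A \<in> SU2" "B \<in> SU2" "a \<in> SU2" "b \<in> SU2" "h \<in> SU2" "w \<in> SU2"
     "tr2 a = 0" "tr2 h = 0" "w = - mat 1" "h ** w ** a = a ** h" "b = matrix_inv a" "B = mat 1"
    using t unfolding tt Rep_set_def by auto
  have r: "cj g h ** cj g w ** cj g a = cj g a ** cj g h"
    using c(10) g by (metis cj_mult)
  show ?thesis unfolding tt conj_tuple_cj Rep_set_def
    using c g r by (simp add: cj_SU2 cj_tr2 cj_one cj_neg cj_inv SU2_inv)
qed

lemma conj_tuple_comp: "g \<in> SU2 \<Longrightarrow> k \<in> SU2 \<Longrightarrow> conj_tuple k (conj_tuple g t) = conj_tuple (k ** g) t"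
  by (cases t) (simp add: conj_tuple_cj cj_comp)

lemma conj_tuple_back: "g \<in> SU2 \<Longrightarrow> conj_tuple (matrix_inv g) (conj_tuple g t) = t"
  by (cases t) (simp add: conj_tuple_cj cj_back)

lemma conj_tuple_id: "conj_tuple (mat 1) t = t"
  by (cases t) (simp add: conj_tuple_cj cj_id)

lemma equiv_conj: "equiv Rep_set conj_rel"
proof (rule equivI)
  show "conj_rel \<subseteq> Rep_set \<times> Rep_set" unfolding conj_rel_def by auto
  show "refl_on Rep_set conj_rel"
  proof (rule refl_onI)
    fix x assume "x \<in> Rep_set" thus "(x,x) \<in> conj_rel"
      unfolding conj_rel_def using SU2_one conj_tuple_id[of x] by force
  qed
  show "sym conj_rel"
    unfolding sym_def conj_rel_def
  proof (clarsimp)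
    fix x g assume "x \<in> Rep_set" "conj_tuple g x \<in> Rep_set" "g \<in> SU2"
    thus "\<exists>k\<in>SU2. x = conj_tuple k (conj_tuple g x)" using SU2_inv conj_tuple_back by metis
  qed
  show "trans conj_rel"
    unfolding trans_def conj_rel_def
  proof (clarsimp)
    fix x g k assume "g \<in> SU2" "k \<in> SU2"
    thus "\<exists>l\<in>SU2. conj_tuple k (conj_tuple g x) = conj_tuple l x" using SU2_mult conj_tuple_comp by metis
  qed
qed

definition I0 :: cmat where "I0 = Q \<i> 0"
definition J0 :: cmat where "J0 = Q 0 \<i>"

lemma I0_eq: "mat \<i> ** sigma_z = I0"
  unfolding I0_def Q_def sigma_z_def mat2_mat mat2_mult by simp
lemma J0_eq: "mat \<i> ** sigma_x = J0"
  unfolding J0_def Q_def sigma_x_def mat2_mat mat2_mult by simp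
lemma neg1_Q: "- mat 1 = Q (-1) 0"
  unfolding Q_def mat2_mat mat2_uminus by simp

definition Ptup :: "complex \<times> complex \<Rightarrow> tuple6" where
  "Ptup z = (Q (fst z) (snd z), mat 1, I0, matrix_inv I0, J0, - mat 1)"

lemma param_Ptup: "param_map z = conj_rel `` {Ptup z}"
  unfolding param_map_def Ptup_def I0_eq J0_eq by (cases z) (simp add: Q_def)

definition F :: "tuple6 \<Rightarrow> complex \<times> complex" where
  "F t = (case t of (A,B,a,b,h,w) \<Rightarrow>
     (Complex (ip A (mat 1)) (ip A a), Complex (ip A (a ** h)) (ip A h)))"

lemma S3_nrm: "z \<in> S3 \<longleftrightarrow> nrm (fst z) (snd z) = 1"
  unfolding S3_def nrm_def by (cases z) simp

lemma ip_cj: "g \<in> SU2 \<Longrightarrow> X \<in> SU2 \<Longrightarrow> Y \<in> SU2 \<Longrightarrow> ip (cj g X) (cj g Y) = ip X Y"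
proof -
  assume g: "g \<in> SU2" and X: "X \<in> SU2" and Y: "Y \<in> SU2"
  obtain u v where gu: "g = Q u v" "nrm u v = 1" using g SU2_E by blast
  obtain p q where Xp: "X = Q p q" using X SU2_E by blast
  obtain r s where Yr: "Y = Q r s" using Y SU2_E by blast
  have n2: "nrm (cnj u) (-v) = 1" using gu(2) unfolding nrm_def by simp
  have "ip (cj g X) (cj g Y) = ip (Q u v ** Q p q ** Q (cnj u) (-v)) (Q u v ** Q r s ** Q (cnj u) (-v))"
    unfolding cj_def gu(1) Xp Yr inv_Q[OF gu(2)] ..
  also have "\<dots> = ip (Q u v ** Q p q) (Q u v ** Q r s)"
    unfolding Q_mult[of u v p q] Q_mult[of u v r s] ip_right n2 by simp
  also have "\<dots> = ip X Y" unfolding ip_left gu(2) Xp Yr by simp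
  finally show ?thesis .
qed

lemma Rep_E:
  assumes "t \<in> Rep_set"
  obtains A a h where "t = (A, mat 1, a, matrix_inv a, h, - mat 1)" "A \<in> SU2" "a \<in> SU2" "h \<in> SU2"
    "tr2 a = 0" "tr2 h = 0" "h ** (- mat 1) ** a = a ** h"
  using assms unfolding Rep_set_def by auto

lemma F_conj: "t \<in> Rep_set \<Longrightarrow> g \<in> SU2 \<Longrightarrow> F (conj_tuple g t) = F t"
proof -
  assume t: "t \<in> Rep_set" and g: "g \<in> SU2"
  obtain A a h where tt: "t = (A, mat 1, a, matrix_inv a, h, - mat 1)" "A \<in> SU2" "a \<in> SU2" "h \<in> SU2"
    using Rep_E[OF t] by metis
  have e: "ip (cj g A) (mat 1) = ip A (mat 1)" using ip_cj[OF g tt(2) SU2_one] cj_one[OF g] by simp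
  show ?thesis unfolding tt(1) conj_tuple_cj F_def
    using tt g e by (simp add: ip_cj cj_mult[symmetric] cj_one SU2_one SU2_mult)
qed

lemma F_P: "F (Ptup z) = z"
  unfolding F_def Ptup_def Q_one I0_def J0_def by (cases z) (simp add: Q_mult ip_Q)

lemma Ptup_Rep: "z \<in> S3 \<Longrightarrow> Ptup z \<in> Rep_set"
proof -
  assume z: "z \<in> S3"
  have n: "nrm \<i> 0 = 1" "nrm 0 \<i> = 1" "nrm (-1) 0 = 1" by (simp_all add: nrm_def)
  have 1: "Q (fst z) (snd z) \<in> SU2" using z unfolding S3_nrm by (rule SU2_Q)
  have 2: "I0 \<in> SU2" "J0 \<in> SU2" "- mat 1 \<in> SU2" unfolding I0_def J0_def neg1_Q using n by (simp_all add: SU2_Q)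
  have 3: "tr2 I0 = 0" "tr2 J0 = 0" unfolding I0_def J0_def Q_def tr2_def by simp_all
  have 4: "J0 ** (- mat 1) ** I0 = I0 ** J0" unfolding I0_def J0_def neg1_Q Q_mult by simp
  show ?thesis unfolding Ptup_def Rep_set_def using 1 2 3 4 by (simp add: SU2_inv SU2_one)
qed

lemma cj_from: "g \<in> SU2 \<Longrightarrow> g ** X = Y ** g \<Longrightarrow> cj g X = Y"
  unfolding cj_def by (simp add: SU2_inv_r flip: matrix_mul_assoc)

lemma step1:
  assumes a: "a \<in> SU2" "tr2 a = 0"
  shows "\<exists>g\<in>SU2. cj g a = I0"
proof -
  obtain \<alpha> \<beta> where ab: "a = Q \<alpha> \<beta>" "nrm \<alpha> \<beta> = 1" using a SU2_E by blast
  have "Re \<alpha> = 0" using a(2) unfolding ab tr2_def Q_def by (simp add: complex_eq_iff)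
  define x where "x = Im \<alpha>"
  have al: "\<alpha> = \<i> * of_real x" unfolding x_def using \<open>Re \<alpha> = 0\<close> by (simp add: complex_eq_iff)
  have xb: "x^2 + (cmod \<beta>)^2 = 1" using ab(2) unfolding nrm_def al by (simp add: norm_mult)
  have "(cmod \<beta>)^2 = 1 - x^2" using xb by simp
  hence bb: "cnj \<beta> * \<beta> = of_real (1 - x^2)"
    by (metis complex_norm_square mult.commute)
  have bb': "cnj \<beta> * \<beta> = 1 - (of_real x)^2" unfolding bb by simp
  have bb'': "\<beta> * cnj \<beta> = 1 - (of_real x)^2" using bb' by (simp add: mult.commute)
  have "x^2 \<le> 1" using xb by (smt (verit) zero_le_power2)
  hence "\<bar>x\<bar> \<le> 1" by (simp add: abs_square_le_1)
  show ?thesis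
  proof (cases "x = -1")
    case True
    hence "\<beta> = 0" using xb by simp
    have "Q 0 1 \<in> SU2" by (rule SU2_Q) (simp add: nrm_def)
    moreover have "Q 0 1 ** a = I0 ** Q 0 1"
      unfolding ab al I0_def Q_mult using True \<open>\<beta> = 0\<close> by simp
    ultimately show ?thesis using cj_from by blast
  next
    case False
    hence xp: "1 + x > 0" using \<open>\<bar>x\<bar> \<le> 1\<close> by simp
    define n where "n = sqrt (2 + 2*x)"
    have np: "n > 0" unfolding n_def using xp by simp
    have n2: "n * n = 2 + 2*x" unfolding n_def using xp by simp
    define r where "r = complex_of_real (1/n)"
    have rr: "r * r * (2 + 2 * of_real x) = 1"
    proof -
      have "(1/n) * (1/n) * (2 + 2*x) = (2 + 2*x) / (n*n)" by simp
      also have "\<dots> = 1" proof -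
        have "2 + 2*x \<noteq> 0" using xp by linarith
        thus ?thesis unfolding n2 by simp
      qed
      finally have "(1/n) * (1/n) * (2 + 2*x) = 1" .
      hence "complex_of_real ((1/n) * (1/n) * (2 + 2*x)) = 1" by (metis of_real_1)
      moreover have "r * r * (2 + 2 * of_real x) = complex_of_real ((1/n) * (1/n) * (2 + 2*x))"
        unfolding r_def by simp
      ultimately show ?thesis by simp
    qed
    have cr: "cnj r = r" unfolding r_def by simp
    define c where "c = r * (1 + of_real x)"
    define d where "d = r * (\<i> * \<beta>)"
    have "complex_of_real (nrm c d) = r * r * ((1 + of_real x) * (1 + of_real x) + \<beta> * cnj \<beta>)"
      unfolding nrm_cnj c_def d_def by (simp add: cr algebra_simps)
    also have "\<dots> = r * r * (2 + 2 * of_real x)" unfolding bb'' by (simp add: algebra_simps power2_eq_square)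
    finally have nr: "nrm c d = 1" using rr by (metis of_real_eq_1_iff)
    have e1: "c * \<alpha> - cnj d * \<beta> = \<i> * c"
    proof -
      have "c * \<alpha> - cnj d * \<beta> = r * ((1 + of_real x) * (\<i> * of_real x) + \<i> * (cnj \<beta> * \<beta>))"
        unfolding c_def d_def al by (simp add: cr algebra_simps)
      also have "\<dots> = \<i> * c" unfolding bb' c_def by (simp add: algebra_simps power2_eq_square)
      finally show ?thesis .
    qed
    have e2: "d * \<alpha> + cnj c * \<beta> = cnj \<i> * d"
      unfolding c_def d_def al by (simp add: cr algebra_simps)
    have "Q c d ** a = I0 ** Q c d"
      unfolding ab I0_def Q_mult Q_eq_iff using e1 e2 by (simp add: mult.commute)
    thus ?thesis using SU2_Q[OF nr] cj_from by blast
  qed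
qed

lemma step2:
  assumes h: "h \<in> SU2" "h ** (- mat 1) ** I0 = I0 ** h"
  shows "\<exists>g\<in>SU2. cj g I0 = I0 \<and> cj g h = J0"
proof -
  obtain \<gamma> \<delta> where gd: "h = Q \<gamma> \<delta>" "nrm \<gamma> \<delta> = 1" using h SU2_E by blast
  have "\<gamma> = 0" using h(2) unfolding gd neg1_Q I0_def Q_mult Q_eq_iff by simp
  hence "(cmod \<delta>)^2 = 1" using gd(2) unfolding nrm_def by simp
  hence dn: "cmod \<delta> = 1" by (simp add: abs_square_eq_1)
  define c where "c = csqrt (- \<i> * \<delta>)"
  have cn: "cmod c = 1" unfolding c_def using dn by (simp add: norm_mult)
  have cc: "cnj c * c = 1"
    using complex_norm_square[of c] cn by (simp add: mult.commute)
  have c2: "c * c = - \<i> * \<delta>" unfolding c_def by (metis power2_csqrt power2_eq_square)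
  have "\<delta> = \<i> * (c * c)" unfolding c2 by simp
  hence e: "cnj c * \<delta> = \<i> * c" using cc by (metis mult.assoc mult.left_commute mult_1)
  have nr: "nrm c 0 = 1" using cn unfolding nrm_def by simp
  have "Q c 0 ** I0 = I0 ** Q c 0" unfolding I0_def Q_mult by (simp add: mult.commute)
  moreover have "Q c 0 ** h = J0 ** Q c 0" unfolding gd \<open>\<gamma> = 0\<close> J0_def Q_mult using e by simp
  ultimately show ?thesis using SU2_Q[OF nr] cj_from by blast
qed

lemma normalize:
  assumes t: "t \<in> Rep_set"
  shows "\<exists>g\<in>SU2. conj_tuple g t = Ptup (F t)" "F t \<in> S3"
proof -
  obtain A a h where tt: "t = (A, mat 1, a, matrix_inv a, h, - mat 1)" "A \<in> SU2" "a \<in> SU2" "h \<in> SU2"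
    "tr2 a = 0" "tr2 h = 0" "h ** (- mat 1) ** a = a ** h"
    using Rep_E[OF t] by metis
  obtain g1 where g1: "g1 \<in> SU2" "cj g1 a = I0" using step1 tt by blast
  have r1: "cj g1 h ** (- mat 1) ** I0 = I0 ** cj g1 h"
    using tt(7) g1 by (metis cj_mult cj_neg cj_one)
  obtain g2 where g2: "g2 \<in> SU2" "cj g2 I0 = I0" "cj g2 (cj g1 h) = J0"
    using step2[OF cj_SU2[OF g1(1) tt(4)] r1] by blast
  define g where "g = g2 ** g1"
  have g: "g \<in> SU2" unfolding g_def using g1 g2 SU2_mult by blast
  have ca: "cj g a = I0" unfolding g_def using g1 g2 by (simp add: cj_comp[symmetric])
  have ch: "cj g h = J0" unfolding g_def using g1 g2 by (simp add: cj_comp[symmetric])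
  obtain p q where pq: "cj g A = Q p q" "nrm p q = 1" using cj_SU2[OF g tt(2)] SU2_E by blast
  have ct: "conj_tuple g t = Ptup (p, q)"
    unfolding tt(1) conj_tuple_cj Ptup_def using g tt ca ch pq
    by (simp add: cj_one cj_neg cj_inv)
  have "F t = F (conj_tuple g t)" using F_conj[OF t g] by simp
  also have "\<dots> = (p, q)" unfolding ct F_P ..
  finally have Ft: "F t = (p,q)" .
  show "\<exists>g\<in>SU2. conj_tuple g t = Ptup (F t)" using g ct unfolding Ft by blast
  show "F t \<in> S3" unfolding Ft S3_nrm using pq by simp
qed

lemma Q_chi: "Q p q = (\<chi> i j. if i = 1 then (if j = 1 then p else - cnj q) else (if j = 1 then q else cnj p))"
  by (subst (2) cmat_eq) (simp add: Q_def mat2_eq_iff)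

lemma cont_Q: "continuous_on S f \<Longrightarrow> continuous_on S g \<Longrightarrow> continuous_on S (\<lambda>x. Q (f x) (g x))"
  unfolding Q_chi
  apply (intro continuous_on_vec_lambda)
  subgoal for i j by (cases "i = 1"; cases "j = 1") (auto intro!: continuous_intros)
  done

lemma cont_mm: "continuous_on S f \<Longrightarrow> continuous_on S g \<Longrightarrow> continuous_on S (\<lambda>x. f x ** (g x :: cmat))"
  unfolding matrix_matrix_mult_def by (intro continuous_on_vec_lambda continuous_intros)

lemma cont_ip: "continuous_on S f \<Longrightarrow> continuous_on S g \<Longrightarrow> continuous_on S (\<lambda>x. ip (f x) (g x))"
  unfolding ip_def by (intro continuous_intros)

lemma F_alt: "F = (\<lambda>t. (Complex (ip (fst t) (mat 1)) (ip (fst t) (fst (snd (snd t)))),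
    Complex (ip (fst t) (fst (snd (snd t)) ** fst (snd (snd (snd (snd t)))))) (ip (fst t) (fst (snd (snd (snd (snd t))))))))"
  unfolding F_def by (auto split: prod.split)

lemma cont_F: "continuous_on S F"
  unfolding F_alt by (intro continuous_intros cont_ip cont_mm)

lemma cont_Ptup: "continuous_on S Ptup"
  unfolding Ptup_def by (intro continuous_intros cont_Q)

lemma istop_cv: "istopology (\<lambda>U. U \<subseteq> Rep_set // conj_rel \<and> openin (subtopology euclidean Rep_set) (\<Union>U))"
  unfolding istopology_def
proof (rule conjI; intro allI impI)
  fix S T assume S: "S \<subseteq> Rep_set // conj_rel \<and> openin (subtopology euclidean Rep_set) (\<Union>S)"
    and T: "T \<subseteq> Rep_set // conj_rel \<and> openin (subtopology euclidean Rep_set) (\<Union>T)"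
  have "\<Union>(S \<inter> T) = \<Union>S \<inter> \<Union>T"
  proof
    show "\<Union>(S \<inter> T) \<subseteq> \<Union>S \<inter> \<Union>T" by blast
    show "\<Union>S \<inter> \<Union>T \<subseteq> \<Union>(S \<inter> T)"
    proof
      fix x assume "x \<in> \<Union>S \<inter> \<Union>T"
      then obtain X Y where "X \<in> S" "Y \<in> T" "x \<in> X" "x \<in> Y" by blast
      hence "X = Y" using quotient_disj[OF equiv_conj, of X Y] S T by blast
      thus "x \<in> \<Union>(S \<inter> T)" using \<open>X \<in> S\<close> \<open>Y \<in> T\<close> \<open>x \<in> X\<close> by blast
    qed
  qed
  thus "S \<inter> T \<subseteq> Rep_set // conj_rel \<and> openin (subtopology euclidean Rep_set) (\<Union>(S \<inter> T))"
    using S T by auto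
next
  fix K assume K: "\<forall>U\<in>K. U \<subseteq> Rep_set // conj_rel \<and> openin (subtopology euclidean Rep_set) (\<Union>U)"
  have "\<Union>(\<Union>K) = \<Union>((\<lambda>U. \<Union>U) ` K)" by blast
  moreover have "openin (subtopology euclidean Rep_set) (\<Union>((\<lambda>U. \<Union>U) ` K))"
    by (rule openin_Union) (use K in auto)
  ultimately show "\<Union>K \<subseteq> Rep_set // conj_rel \<and> openin (subtopology euclidean Rep_set) (\<Union>(\<Union>K))"
    using K by auto
qed

lemma openin_cv: "openin char_variety U \<longleftrightarrow> U \<subseteq> Rep_set // conj_rel \<and> openin (subtopology euclidean Rep_set) (\<Union>U)"
  unfolding char_variety_def quotient_topology_def using istop_cv by simp

lemma topspace_cv: "topspace char_variety = Rep_set // conj_rel"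
proof
  show "topspace char_variety \<subseteq> Rep_set // conj_rel" unfolding topspace_def openin_cv by blast
  have "openin char_variety (Rep_set // conj_rel)"
    unfolding openin_cv Union_quotient[OF equiv_conj] by simp
  thus "Rep_set // conj_rel \<subseteq> topspace char_variety" by (rule openin_subset)
qed

definition G :: "tuple6 set \<Rightarrow> complex \<times> complex" where "G c = F (SOME t. t \<in> c)"

lemma self_class: "t \<in> Rep_set \<Longrightarrow> t \<in> conj_rel `` {t}"
  by (rule equiv_class_self[OF equiv_conj])

lemma G_class: "t \<in> Rep_set \<Longrightarrow> G (conj_rel `` {t}) = F t"
proof -
  assume t: "t \<in> Rep_set"
  have "t \<in> conj_rel `` {t}" using t by (rule self_class)
  hence "(SOME s. s \<in> conj_rel `` {t}) \<in> conj_rel `` {t}" by (rule someI)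
  then obtain g where "g \<in> SU2" "(SOME s. s \<in> conj_rel `` {t}) = conj_tuple g t"
    unfolding conj_rel_def by auto
  thus ?thesis unfolding G_def using F_conj[OF t] by simp
qed

lemma mem_class: "c \<in> Rep_set // conj_rel \<Longrightarrow> t \<in> c \<Longrightarrow> t \<in> Rep_set \<and> c = conj_rel `` {t}"
proof -
  assume c: "c \<in> Rep_set // conj_rel" and t: "t \<in> c"
  obtain x where x: "c = conj_rel `` {x}" "x \<in> Rep_set" using c by (rule quotientE)
  have "(x, t) \<in> conj_rel" using t x by simp
  thus ?thesis using x equiv_class_eq[OF equiv_conj] unfolding conj_rel_def by auto
qed

lemma cont_param: "continuous_map (subtopology euclidean S3) char_variety param_map"
  unfolding continuous_map_def
proof (intro conjI allI impI)
  show "param_map \<in> topspace (subtopology euclidean S3) \<rightarrow> topspace char_variety"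
    unfolding topspace_cv param_Ptup by (auto intro: quotientI Ptup_Rep)
next
  fix U assume U: "openin char_variety U"
  hence U1: "U \<subseteq> Rep_set // conj_rel" and U2: "openin (subtopology euclidean Rep_set) (\<Union>U)"
    unfolding openin_cv by auto
  have cP: "continuous_map (subtopology euclidean S3) (subtopology euclidean Rep_set) Ptup"
    unfolding continuous_map_in_subtopology using cont_Ptup Ptup_Rep by auto
  have "{x \<in> topspace (subtopology euclidean S3). param_map x \<in> U} =
        {x \<in> topspace (subtopology euclidean S3). Ptup x \<in> \<Union>U}"
  proof (rule Collect_cong, rule conj_cong[OF refl])
    fix z assume z: "z \<in> topspace (subtopology euclidean S3)"
    hence zR: "Ptup z \<in> Rep_set" using Ptup_Rep by simp
    have self: "Ptup z \<in> conj_rel `` {Ptup z}" using zR by (rule self_class)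
    show "param_map z \<in> U \<longleftrightarrow> Ptup z \<in> \<Union>U"
    proof
      assume "param_map z \<in> U" thus "Ptup z \<in> \<Union>U" using self unfolding param_Ptup by blast
    next
      assume "Ptup z \<in> \<Union>U"
      then obtain C where "C \<in> U" "Ptup z \<in> C" by blast
      hence "C = conj_rel `` {Ptup z}" using mem_class U1 by blast
      thus "param_map z \<in> U" unfolding param_Ptup using \<open>C \<in> U\<close> by simp
    qed
  qed
  moreover have "openin (subtopology euclidean S3) {x \<in> topspace (subtopology euclidean S3). Ptup x \<in> \<Union>U}"
    using cP U2 unfolding continuous_map_def by blast
  ultimately show "openin (subtopology euclidean S3) {x \<in> topspace (subtopology euclidean S3). param_map x \<in> U}"
    by simp
qed

lemma cont_G: "continuous_map char_variety (subtopology euclidean S3) G"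
  unfolding continuous_map_def
proof (intro conjI allI impI)
  show "G \<in> topspace char_variety \<rightarrow> topspace (subtopology euclidean S3)"
    unfolding topspace_cv by (auto elim!: quotientE simp: G_class normalize(2))
next
  fix U assume U: "openin (subtopology euclidean S3) U"
  have cF: "continuous_map (subtopology euclidean Rep_set) (subtopology euclidean S3) F"
    unfolding continuous_map_in_subtopology using cont_F normalize(2) by auto
  have "\<Union>{c \<in> topspace char_variety. G c \<in> U} = {t \<in> topspace (subtopology euclidean Rep_set). F t \<in> U}"
  proof
    show "\<Union>{c \<in> topspace char_variety. G c \<in> U} \<subseteq> {t \<in> topspace (subtopology euclidean Rep_set). F t \<in> U}"
    proof
      fix t assume "t \<in> \<Union>{c \<in> topspace char_variety. G c \<in> U}"
      then obtain c where c: "c \<in> Rep_set // conj_rel" "G c \<in> U" "t \<in> c" unfolding topspace_cv by blast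
      hence "t \<in> Rep_set" "c = conj_rel `` {t}" using mem_class by blast+
      thus "t \<in> {t \<in> topspace (subtopology euclidean Rep_set). F t \<in> U}" using c G_class by simp
    qed
    show "{t \<in> topspace (subtopology euclidean Rep_set). F t \<in> U} \<subseteq> \<Union>{c \<in> topspace char_variety. G c \<in> U}"
    proof
      fix t assume "t \<in> {t \<in> topspace (subtopology euclidean Rep_set). F t \<in> U}"
      hence t: "t \<in> Rep_set" "F t \<in> U" by auto
      have "t \<in> conj_rel `` {t}" using t(1) by (rule self_class)
      moreover have "conj_rel `` {t} \<in> {c \<in> topspace char_variety. G c \<in> U}"
        unfolding topspace_cv using t by (simp add: quotientI G_class)
      ultimately show "t \<in> \<Union>{c \<in> topspace char_variety. G c \<in> U}" by blast
    qed
  qed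
  moreover have "openin (subtopology euclidean Rep_set) {t \<in> topspace (subtopology euclidean Rep_set). F t \<in> U}"
    using cF U unfolding continuous_map_def by blast
  ultimately show "openin char_variety {c \<in> topspace char_variety. G c \<in> U}"
    unfolding openin_cv topspace_cv by auto
qed

theorem mainTheorem6:
  shows "homeomorphic_map (subtopology euclidean S3) char_variety param_map
         \<and> (\<forall>c\<in>topspace char_variety. nonabelian_class c)"
proof
  have "homeomorphic_maps (subtopology euclidean S3) char_variety param_map G"
    unfolding homeomorphic_maps_def
  proof (intro conjI ballI cont_param cont_G)
    fix z assume "z \<in> topspace (subtopology euclidean S3)"
    hence "z \<in> S3" by simp
    thus "G (param_map z) = z" unfolding param_Ptup by (simp add: G_class Ptup_Rep F_P)
  next
    fix c assume "c \<in> topspace char_variety"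
    then obtain t where t: "t \<in> Rep_set" "c = conj_rel `` {t}" unfolding topspace_cv by (auto elim: quotientE)
    obtain g where g: "g \<in> SU2" "conj_tuple g t = Ptup (F t)" using normalize(1)[OF t(1)] by blast
    have "Ptup (F t) \<in> Rep_set" by (rule Ptup_Rep[OF normalize(2)[OF t(1)]])
    moreover have "\<exists>g\<in>SU2. Ptup (F t) = conj_tuple g t" using g by metis
    ultimately have "(t, Ptup (F t)) \<in> conj_rel" unfolding conj_rel_def using t(1) by simp
    hence "conj_rel `` {Ptup (F t)} = conj_rel `` {t}" using equiv_class_eq_iff[OF equiv_conj] by metis
    thus "param_map (G c) = c" unfolding t(2) G_class[OF t(1)] param_Ptup by simp
  qed
  thus "homeomorphic_map (subtopology euclidean S3) char_variety param_map"
    using homeomorphic_map_maps by blast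
next
  show "\<forall>c\<in>topspace char_variety. nonabelian_class c"
  proof
    fix c assume "c \<in> topspace char_variety"
    then obtain t where t: "t \<in> Rep_set" "c = conj_rel `` {t}" unfolding topspace_cv by (auto elim: quotientE)
    obtain A a h where tt: "t = (A, mat 1, a, matrix_inv a, h, - mat 1)" "A \<in> SU2" "a \<in> SU2" "h \<in> SU2"
      "h ** (- mat 1) ** a = a ** h" using Rep_E[OF t(1)] by metis
    have "\<not> pairwise_commute_tuple t"
    proof
      assume "pairwise_commute_tuple t"
      hence "\<forall>X\<in>{A, mat 1, a, matrix_inv a, h, - mat 1}. \<forall>Y\<in>{A, mat 1, a, matrix_inv a, h, - mat 1}. X ** Y = Y ** X"
        unfolding tt(1) pairwise_commute_tuple_def by (simp only: prod.case)
      hence comm: "a ** h = h ** a" by blast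
      have "a ** h = - (h ** a)" using tt(5) by (simp add: neg_mult mult_neg)
      hence "a ** h = - (a ** h)" using comm by simp
      hence "a ** h = 0" by (simp add: vec_eq_iff)
      moreover have "a ** h \<in> SU2" using tt SU2_mult by blast
      ultimately show False unfolding SU2_def by (simp add: det_2)
    qed
    moreover have "t \<in> c" unfolding t(2) using t(1) by (rule self_class)
    ultimately show "nonabelian_class c" unfolding nonabelian_class_def by blast
  qed
qed

end
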